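(* Let $X,Y\subseteq\mathbb{R}^n$ and let $P$ be a coordinate subspace of $\mathbb{R}^n$. Then $\pi_P(X\cup Y)=\pi_PX\cup\pi_PY$. If moreover $X$ and $Y$ are closed and $X\cup Y$ is $\ell_1$-convex, then also $\pi_P(X\cap Y)=\pi_PX\cap\pi_PY$.
   Context: A coordinate subspace is a linear subspace spanned by a subset of the standard basis; $\pi_P$ is orthogonal projection onto $P$. A subset $Z\subseteq\mathbb{R}^n$ is $\ell_1$-convex if for all $z,z'\in Z$, with $D=\sum_i|z_i-z'_i|$, there is $\gamma\colon[0,D]\to Z$ with $\gamma(0)=z,\gamma(D)=z'$ and $\sum_i|\gamma_i(t)-\gamma_i(t')|=|t-t'|$ for all $t,t'$. *)

theory Defs
  imports "HOL-Analysis.Analysis"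
begin

definition coordinate_subspace :: "(real ^ 'n) set \<Rightarrow> bool" where
  "coordinate_subspace P \<longleftrightarrow> (\<exists>S :: 'n set. P = span ((\<lambda>i. axis i 1) ` S))"

definition orth_proj :: "(real ^ 'n) set \<Rightarrow> real ^ 'n \<Rightarrow> real ^ 'n" where
  "orth_proj P x = (THE p. p \<in> P \<and> (\<forall>y\<in>P. (x - p) \<bullet> y = 0))"

definition l1_dist :: "real ^ 'n \<Rightarrow> real ^ 'n \<Rightarrow> real" where
  "l1_dist z z' = (\<Sum>i\<in>UNIV. \<bar>z $ i - z' $ i\<bar>)"

definition l1_convex :: "(real ^ 'n) set \<Rightarrow> bool" where
  "l1_convex Z \<longleftrightarrow> (\<forall>z\<in>Z. \<forall>z'\<in>Z. \<exists>\<gamma> :: real \<Rightarrow> real ^ 'n.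
      \<gamma> ` {0 .. l1_dist z z'} \<subseteq> Z \<and> \<gamma> 0 = z \<and> \<gamma> (l1_dist z z') = z' \<and>
      (\<forall>t\<in>{0 .. l1_dist z z'}. \<forall>t'\<in>{0 .. l1_dist z z'}. l1_dist (\<gamma> t) (\<gamma> t') = \<bar>t - t'\<bar>))"

end

theory Submission
  imports Defs
begin

lemma coord_span_char:
  "span ((\<lambda>i. axis i 1) ` S) = {v :: real ^ 'n. \<forall>i. i \<notin> S \<longrightarrow> v $ i = 0}"
proof -
  have sub: "(\<lambda>i. axis i (1::real)) ` S \<subseteq> Basis"
    by (auto simp: Basis_vec_def)
  have "span ((\<lambda>i. axis i 1) ` S) = {x. \<forall>b\<in>Basis. b \<notin> (\<lambda>i. axis i (1::real)) ` S \<longrightarrow> x \<bullet> b = 0}"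
    by (rule span_substd_basis[OF sub])
  also have "\<dots> = {v :: real ^ 'n. \<forall>i. i \<notin> S \<longrightarrow> v $ i = 0}"
  proof (auto simp: Basis_vec_def inner_axis axis_eq_axis)
  qed
  finally show ?thesis .
qed

lemma orth_proj_coord:
  assumes "P = span ((\<lambda>i. axis i 1) ` S)"
  shows "orth_proj P x = (\<chi> i. if i \<in> S then x $ i else 0)"
  unfolding orth_proj_def
proof (rule the1_equality)
  let ?p = "(\<chi> i. if i \<in> S then x $ i else 0) :: real ^ 'a"
  have PS: "P = {v :: real ^ 'a. \<forall>i. i \<notin> S \<longrightarrow> v $ i = 0}"
    using assms coord_span_char by simp
  have orth: "(x - ?p) \<bullet> y = 0" if "y \<in> P" for y
    using that unfolding PS inner_vec_def by (auto intro!: sum.neutral)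
  show "?p \<in> P \<and> (\<forall>y\<in>P. (x - ?p) \<bullet> y = 0)" using orth unfolding PS by auto
  show "\<exists>!p. p \<in> P \<and> (\<forall>y\<in>P. (x - p) \<bullet> y = 0)"
  proof (rule ex1I[of _ ?p])
    show "?p \<in> P \<and> (\<forall>y\<in>P. (x - ?p) \<bullet> y = 0)" using orth unfolding PS by auto
    fix q assume q: "q \<in> P \<and> (\<forall>y\<in>P. (x - q) \<bullet> y = 0)"
    have sP: "subspace P" using assms by simp
    have d: "?p - q \<in> P" using q \<open>?p \<in> P \<and> _\<close> subspace_diff[OF sP] by blast
    have "(x - q) \<bullet> (?p - q) = 0" using q d by blast
    moreover have "(x - ?p) \<bullet> (?p - q) = 0" using orth d by blast
    ultimately have "(?p - q) \<bullet> (?p - q) = 0"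
      by (simp add: inner_diff_left)
    thus "q = ?p" by simp
  qed
qed


lemma geodesic_coord:
  fixes x y g :: "real ^ 'n"
  assumes "l1_dist x g + l1_dist g y = l1_dist x y" "x $ i = y $ i"
  shows "g $ i = x $ i"
proof -
  let ?f = "\<lambda>j. \<bar>x $ j - g $ j\<bar> + \<bar>g $ j - y $ j\<bar> - \<bar>x $ j - y $ j\<bar>"
  have "sum ?f UNIV = 0" using assms(1) unfolding l1_dist_def
    by (simp add: sum.distrib sum_subtractf)
  moreover have "\<And>j. 0 \<le> ?f j" by simp
  ultimately have "?f i = 0" using sum_nonneg_eq_0_iff[of UNIV ?f] by auto
  thus ?thesis using assms(2) by simp
qed

theorem corollary2p5:
  fixes X Y P :: "(real ^ 'n) set"
  assumes "coordinate_subspace P"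
  shows "orth_proj P ` (X \<union> Y) = orth_proj P ` X \<union> orth_proj P ` Y \<and>
         (closed X \<and> closed Y \<and> l1_convex (X \<union> Y) \<longrightarrow>
          orth_proj P ` (X \<inter> Y) = orth_proj P ` X \<inter> orth_proj P ` Y)"
proof (intro conjI impI)
  show "orth_proj P ` (X \<union> Y) = orth_proj P ` X \<union> orth_proj P ` Y" by (rule image_Un)
  assume h: "closed X \<and> closed Y \<and> l1_convex (X \<union> Y)"
  obtain S where PS: "P = span ((\<lambda>i. axis i 1) ` S)"
    using assms unfolding coordinate_subspace_def by blast
  note pr = orth_proj_coord[OF PS]
  show "orth_proj P ` (X \<inter> Y) = orth_proj P ` X \<inter> orth_proj P ` Y"
  proof
    show "orth_proj P ` (X \<inter> Y) \<subseteq> orth_proj P ` X \<inter> orth_proj P ` Y" by blast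
    show "orth_proj P ` X \<inter> orth_proj P ` Y \<subseteq> orth_proj P ` (X \<inter> Y)"
    proof
      fix p assume "p \<in> orth_proj P ` X \<inter> orth_proj P ` Y"
      then obtain x y where xy: "x \<in> X" "y \<in> Y" "p = orth_proj P x" "p = orth_proj P y" by blast
      have xiyi: "x $ i = y $ i" if "i \<in> S" for i
      proof -
        have "orth_proj P x $ i = orth_proj P y $ i" using xy by simp
        thus ?thesis using that pr by simp
      qed
      define D where "D = l1_dist x y"
      obtain g where g: "g ` {0..D} \<subseteq> X \<union> Y" "g 0 = x" "g D = y"
        "\<And>t t'. t \<in> {0..D} \<Longrightarrow> t' \<in> {0..D} \<Longrightarrow> l1_dist (g t) (g t') = \<bar>t - t'\<bar>"
        using h[THEN conjunct2, THEN conjunct2, unfolded l1_convex_def, rule_format, of x y] xy(1,2) unfolding D_def by blast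
      have D0: "0 \<le> D" unfolding D_def l1_dist_def by (simp add: sum_nonneg)
      have cont: "continuous_on {0..D} g"
        unfolding continuous_on_iff
      proof (intro ballI allI impI)
        fix t e assume t: "t \<in> {0..D}" and e: "(0::real) < e"
        show "\<exists>d>0. \<forall>t'\<in>{0..D}. dist t' t < d \<longrightarrow> dist (g t') (g t) < e"
        proof (intro exI[of _ e] conjI ballI impI e)
          fix t' assume t': "t' \<in> {0..D}" "dist t' t < e"
          have "dist (g t') (g t) = norm (g t' - g t)" by (simp add: dist_norm)
          also have "\<dots> \<le> l1_dist (g t') (g t)" unfolding l1_dist_def
            using norm_le_l1_cart[of "g t' - g t"] by simp
          also have "\<dots> = dist t' t" using g(4)[OF t' (1) t] by (simp add: dist_real_def)
          finally show "dist (g t') (g t) < e" using t' by simp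
        qed
      qed
      have "\<exists>t\<in>{0..D}. g t \<in> X \<inter> Y"
      proof (rule ccontr)
        assume nt: "\<not> ?thesis"
        have c: "connected {0..D}" by simp
        have A: "closedin (top_of_set {0..D}) ({0..D} \<inter> g -` X)"
          using continuous_closedin_preimage[OF cont] h by blast
        have B: "closedin (top_of_set {0..D}) ({0..D} \<inter> g -` Y)"
          using continuous_closedin_preimage[OF cont] h by blast
        have "0 \<in> {0..D} \<inter> g -` X" using D0 g xy by auto
        moreover have "D \<in> {0..D} \<inter> g -` Y" using D0 g xy by auto
        moreover have "{0..D} \<subseteq> ({0..D} \<inter> g -` X) \<union> ({0..D} \<inter> g -` Y)" using g(1) by auto
        moreover have "({0..D} \<inter> g -` X) \<inter> ({0..D} \<inter> g -` Y) = {}" using nt by auto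
        ultimately have "\<exists>E1 E2. closedin (top_of_set {0..D}) E1 \<and> closedin (top_of_set {0..D}) E2 \<and>
            E1 \<union> E2 = {0..D} \<and> E1 \<inter> E2 = {} \<and> E1 \<noteq> {} \<and> E2 \<noteq> {}"
          using A B by blast
        thus False using c unfolding connected_closedin_eq by simp
      qed
      then obtain t where t: "t \<in> {0..D}" "g t \<in> X \<inter> Y" by blast
      have "l1_dist x (g t) + l1_dist (g t) y = l1_dist x y"
        using g(4)[of 0 t] g(4)[of t D] t D0 g(2,3) by (simp add: D_def)
      hence "g t $ i = x $ i" if "i \<in> S" for i using geodesic_coord xiyi that by blast
      hence "orth_proj P (g t) = p" using xy pr by (simp add: vec_eq_iff)
      thus "p \<in> orth_proj P ` (X \<inter> Y)" using t by blast
    qed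
  qed
qed

end
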